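(* Let $\mathcal G$ be a strongly connected directed graph with no self loops, with $n$ vertices and $m$ edges. Let $B=S-D\in\mathbb{R}^{n\times m}$ be its incidence matrix, let $Q=DB^\mathsf{T}$, and let $W=\mathbf{1}z^\mathsf{T}$ and $Q^\ddagger$ be as defined in the context. Let $\omega^{\mathrm u}\in\mathbb{R}^n$ be constant and let $k>0$. Suppose $\tilde\theta:[0,\infty)\to\mathbb{R}^n$ satisfies \[ \dot{\tilde\theta}(t)=\omega^{\mathrm u}+c(t),\qquad \tilde\beta(t)=B^\mathsf{T}\tilde\theta(t),\qquad y(t)=D\tilde\beta(t), \] with the controller $c(t)=k\,y(t)$. Then \[ \tilde\theta(t)=\Big(Wt+k^{-1}Q^\ddagger\big(e^{kQt}-I\big)\Big)\omega^{\mathrm u}+e^{kQt}\tilde\theta(0). \] Moreover, as $t\to\infty$, the frequency $\omega(t)=\omega^{\mathrm u}+c(t)$ converges to $\omega^{\mathrm{ss}}=W\omega^{\mathrm u}$, and $\tilde\beta(t)$ converges to $\beta^{\mathrm{ss}}=-k^{-1}B^\mathsf{T}Q^\ddagger\omega^{\mathrm u}$.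
   Context: The matrices $S,D\in\mathbb{R}^{n\times m}$ are defined by $S_{ie}=1$ if node $i$ is the source of edge $e$ and $0$ otherwise, and $D_{ie}=1$ if node $i$ is the destination of edge $e$ and $0$ otherwise. The vector $\mathbf{1}$ is the all-ones vector. The matrix $Q=DB^\mathsf{T}$ is an irreducible rate matrix (nonnegative off-diagonal entries, zero row sums). Let $z>0$ be its left eigenvector for eigenvalue $0$ ($z^\mathsf{T}Q=0$), normalized so that $\mathbf{1}^\mathsf{T}z=1$, and set $W=\mathbf{1}z^\mathsf{T}$. Write $Q=T\begin{bmatrix}0&0\\0&\Lambda\end{bmatrix}T^{-1}$, where $T$ is invertible with first column $\mathbf{1}$, the first row of $T^{-1}$ is $z^\mathsf{T}$, and $\Lambda\in\mathbb{R}^{(n-1)\times(n-1)}$ is invertible. Define $Q^\ddagger=T\begin{bmatrix}0&0\\0&\Lambda^{-1}\end{bmatrix}T^{-1}$. *)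

theory Defs
  imports "HOL-Analysis.Analysis"
begin

definition edge_rel :: "('m \<Rightarrow> 'n) \<Rightarrow> ('m \<Rightarrow> 'n) \<Rightarrow> ('n \<times> 'n) set" where
  "edge_rel src dst = {(src e, dst e) | e. True}"

definition strongly_connected :: "('m \<Rightarrow> 'n) \<Rightarrow> ('m \<Rightarrow> 'n) \<Rightarrow> bool" where
  "strongly_connected src dst \<longleftrightarrow> (\<forall>i j. (i, j) \<in> (edge_rel src dst)\<^sup>*)"

definition src_mat :: "('m::finite \<Rightarrow> 'n::finite) \<Rightarrow> real^'m^'n" where
  "src_mat src = (\<chi> i e. if src e = i then 1 else 0)"

definition dst_mat :: "('m::finite \<Rightarrow> 'n::finite) \<Rightarrow> real^'m^'n" where
  "dst_mat dst = (\<chi> i e. if dst e = i then 1 else 0)"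

definition incidence_mat :: "('m::finite \<Rightarrow> 'n::finite) \<Rightarrow> ('m \<Rightarrow> 'n) \<Rightarrow> real^'m^'n" where
  "incidence_mat src dst = src_mat src - dst_mat dst"

primrec mat_pow :: "real^'n^'n \<Rightarrow> nat \<Rightarrow> real^'n^'n" where
  "mat_pow A 0 = mat 1"
| "mat_pow A (Suc k) = A ** mat_pow A k"

definition mat_exp :: "real^'n^'n \<Rightarrow> real^'n^'n" where
  "mat_exp A = (\<Sum>k. (1 / fact k) *\<^sub>R mat_pow A k)"

definition ones :: "real^'n" where "ones = (\<chi> i. 1)"

definition ones_outer :: "real^'n \<Rightarrow> real^'n^'n" where
  "ones_outer z = (\<chi> i j. z $ j)"

text \<open>Block structure diag(0, M) with respect to a distinguished ("first") index i0:
  row i0 and column i0 vanish.\<close>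
definition zero_first_block :: "'n \<Rightarrow> real^'n^'n \<Rightarrow> bool" where
  "zero_first_block i0 M \<longleftrightarrow> (\<forall>j. M $ i0 $ j = 0 \<and> M $ j $ i0 = 0)"

definition proj_off :: "'n \<Rightarrow> real^'n^'n" where
  "proj_off i0 = (\<chi> i j. if i = j \<and> i \<noteq> i0 then 1 else 0)"

end

theory Submission
  imports Defs
begin

typedef (overloaded) ('n::finite) sq = "UNIV :: (real^'n^'n) set" morphisms Rep_sq Abs_sq by simp
setup_lifting type_definition_sq

instantiation sq :: (finite) real_normed_algebra_1
begin
lift_definition zero_sq :: "'a sq" is "0" .
lift_definition one_sq :: "'a sq" is "mat 1" .
lift_definition plus_sq :: "'a sq \<Rightarrow> 'a sq \<Rightarrow> 'a sq" is "(+)" .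
lift_definition minus_sq :: "'a sq \<Rightarrow> 'a sq \<Rightarrow> 'a sq" is "(-)" .
lift_definition uminus_sq :: "'a sq \<Rightarrow> 'a sq" is "uminus" .
lift_definition times_sq :: "'a sq \<Rightarrow> 'a sq \<Rightarrow> 'a sq" is "(**)" .
lift_definition scaleR_sq :: "real \<Rightarrow> 'a sq \<Rightarrow> 'a sq" is "scaleR" .
lift_definition norm_sq :: "'a sq \<Rightarrow> real" is "\<lambda>A. onorm ((*v) A)" .
definition sgn_sq :: "'a sq \<Rightarrow> 'a sq" where "sgn_sq x = Abs_sq (Rep_sq x /\<^sub>R onorm ((*v) (Rep_sq x)))"
definition dist_sq :: "'a sq \<Rightarrow> 'a sq \<Rightarrow> real" where "dist_sq x y = onorm ((*v) (Rep_sq x - Rep_sq y))"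
definition uniformity_sq :: "('a sq \<times> 'a sq) filter" where
  "uniformity_sq = (INF e\<in>{0 <..}. principal {(x, y). dist x y < e})"
definition open_sq :: "'a sq set \<Rightarrow> bool" where
  "open_sq U = (\<forall>x\<in>U. eventually (\<lambda>(x', y). x' = x \<longrightarrow> y \<in> U) uniformity)"

lemma mat_add_rdistrib: "((A::real^'n^'n) + B) ** C = A ** C + B ** C"
  by (simp add: matrix_eq matrix_vector_mul_assoc[symmetric] matrix_vector_mult_add_rdistrib)

lemma mat_scaleR_mv: "((r::real) *\<^sub>R (A::real^'n^'m)) *v x = r *\<^sub>R (A *v x)"
  by (simp add: vec_eq_iff matrix_vector_mult_def sum_distrib_left mult.assoc)

lemma onorm_mat_triangle: "onorm ((*v) ((A::real^'n^'n) + B)) \<le> onorm ((*v) A) + onorm ((*v) B)"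
  unfolding matrix_vector_mult_add_rdistrib using onorm_triangle[OF matrix_vector_mul_bounded_linear matrix_vector_mul_bounded_linear, of A B]
  by (simp add: matrix_vector_mult_add_rdistrib)

instance
proof
  fix a b c :: "'a sq" and r s :: real
  show "a + b + c = a + (b + c)" by transfer (simp add: add.assoc)
  show "a + b = b + a" by transfer (simp add: add.commute)
  show "0 + a = a" by transfer simp
  show "- a + a = 0" by transfer simp
  show "a - b = a + - b" by transfer simp
  show "r *\<^sub>R (a + b) = r *\<^sub>R a + r *\<^sub>R b" by transfer (simp add: scaleR_right_distrib)
  show "(r + s) *\<^sub>R a = r *\<^sub>R a + s *\<^sub>R a" by transfer (simp add: scaleR_left_distrib)
  show "r *\<^sub>R s *\<^sub>R a = (r * s) *\<^sub>R a" by transfer simp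
  show "1 *\<^sub>R a = a" by transfer simp
  show "a * b * c = a * (b * c)" by transfer (simp add: matrix_mul_assoc)
  show "(a + b) * c = a * c + b * c" by transfer (simp add: mat_add_rdistrib)
  show "a * (b + c) = a * b + a * c" by transfer (simp add: matrix_add_ldistrib)
  show "1 * a = a" by transfer simp
  show "a * 1 = a" by transfer simp
  show "(0::'a sq) \<noteq> 1"
  proof transfer
    show "(0::real^'a^'a) \<noteq> mat 1"
    proof
      assume h: "(0::real^'a^'a) = mat 1"
      have "(mat 1 :: real^'a^'a) $ undefined $ undefined = 1" by (simp add: mat_def)
      with h show False by simp
    qed
  qed
  show "r *\<^sub>R a * b = r *\<^sub>R (a * b)" by transfer (simp add: scalar_matrix_assoc)
  show "a * r *\<^sub>R b = r *\<^sub>R (a * b)" by transfer (simp add: matrix_scalar_ac scalar_matrix_assoc)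
  show "dist a b = norm (a - b)" by (simp add: dist_sq_def norm_sq_def minus_sq.rep_eq)
  show "sgn a = inverse (norm a) *\<^sub>R a" by (simp add: sgn_sq_def norm_sq_def scaleR_sq_def divide_inverse_commute)
  show "(uniformity :: ('a sq \<times> 'a sq) filter) = (INF e\<in>{0 <..}. principal {(x, y). dist x y < e})"
    by (simp add: uniformity_sq_def)
  show "\<And>U. open (U :: 'a sq set) = (\<forall>x\<in>U. eventually (\<lambda>(x', y). x' = x \<longrightarrow> y \<in> U) uniformity)"
    by (simp add: open_sq_def)
  show "(norm a = 0) = (a = 0)"
  proof transfer
    fix A :: "real^'a^'a"
    have "onorm ((*v) A) = 0 \<longleftrightarrow> (\<forall>x. A *v x = 0)" by (rule onorm_eq_0[OF matrix_vector_mul_bounded_linear])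

    also have "\<dots> \<longleftrightarrow> A = 0"
      by (auto simp: matrix_eq)
    finally show "(onorm ((*v) A) = 0) = (A = 0)" .
  qed
  show "norm (a + b) \<le> norm a + norm b" by transfer (rule onorm_mat_triangle)
  show "norm (r *\<^sub>R a) = \<bar>r\<bar> * norm a"
  proof transfer
    fix r and A :: "real^'a^'a"
    have "(*v) (r *\<^sub>R A) = (\<lambda>x. r *\<^sub>R (A *v x))" by (simp add: fun_eq_iff mat_scaleR_mv)
    then show "onorm ((*v) (r *\<^sub>R A)) = \<bar>r\<bar> * onorm ((*v) A)"
      using onorm_scaleR[OF matrix_vector_mul_bounded_linear] by simp
  qed
  show "norm (a * b) \<le> norm a * norm b"
  proof transfer
    fix A B :: "real^'a^'a"
    have "(*v) (A ** B) = (*v) A \<circ> (*v) B"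
      by (simp add: fun_eq_iff matrix_vector_mul_assoc)
    then show "onorm ((*v) (A ** B)) \<le> onorm ((*v) A) * onorm ((*v) B)"
      using onorm_compose[OF matrix_vector_mul_bounded_linear matrix_vector_mul_bounded_linear] by simp
  qed
  show "norm (1::'a sq) = 1"
  proof transfer
    have "(*v) (mat 1 :: real^'a^'a) = (\<lambda>x. x)" by (simp add: fun_eq_iff)
    then show "onorm ((*v) (mat 1 :: real^'a^'a)) = 1" by (simp add: onorm_id)
  qed
qed
end

lemma norm_mat_le_sum: "norm (A::real^'n^'m) \<le> (\<Sum>i\<in>UNIV. \<Sum>j\<in>UNIV. \<bar>A $ i $ j\<bar>)"
proof -
  have "norm A \<le> (\<Sum>i\<in>UNIV. norm (A $ i))"
    unfolding norm_vec_def by (rule L2_set_le_sum) simp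
  also have "\<dots> \<le> (\<Sum>i\<in>UNIV. \<Sum>j\<in>UNIV. \<bar>A $ i $ j\<bar>)"
    by (rule sum_mono) (rule norm_le_l1_cart)
  finally show ?thesis .
qed

lemma norm_Rep_le: "norm (Rep_sq (x::'n::finite sq)) \<le> (real CARD('n) * real CARD('n)) * norm x"
proof -
  have "norm (Rep_sq x) \<le> (\<Sum>i\<in>(UNIV::'n set). \<Sum>j\<in>(UNIV::'n set). norm x)"
  proof -
    have "(\<Sum>i\<in>UNIV. \<Sum>j\<in>UNIV. \<bar>Rep_sq x $ i $ j\<bar>) \<le> (\<Sum>i\<in>(UNIV::'n set). \<Sum>j\<in>(UNIV::'n set). norm x)"
      by (intro sum_mono) (simp add: norm_sq.rep_eq matrix_component_le_onorm)
    then show ?thesis using norm_mat_le_sum[of "Rep_sq x"] by linarith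
  qed
  then show ?thesis by simp
qed

lemma norm_le_Rep: "norm (x::'n::finite sq) \<le> (real CARD('n) * real CARD('n)) * norm (Rep_sq x)"
  unfolding norm_sq.rep_eq
proof (rule onorm_le_matrix_component)
  fix i j
  show "\<bar>Rep_sq x $ i $ j\<bar> \<le> norm (Rep_sq x)"
    using component_le_norm_cart[of "Rep_sq x $ i" j] Finite_Cartesian_Product.norm_nth_le[of "Rep_sq x" i] by linarith
qed

lemma bl_Rep: "bounded_linear (Rep_sq :: 'n::finite sq \<Rightarrow> _)"
  by (rule bounded_linear_intro[where K="real CARD('n) * real CARD('n)"])
     (auto simp: plus_sq.rep_eq scaleR_sq.rep_eq, metis norm_Rep_le mult.commute)

lemma bl_Abs: "bounded_linear (Abs_sq :: _ \<Rightarrow> 'n::finite sq)"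
  by (rule bounded_linear_intro[where K="real CARD('n) * real CARD('n)"])
     (auto simp: plus_sq_def scaleR_sq_def Abs_sq_inverse, metis norm_le_Rep Abs_sq_inverse UNIV_I mult.commute)

instance sq :: (finite) banach
proof
  fix X :: "nat \<Rightarrow> 'a sq"
  assume "Cauchy X"
  then have "Cauchy (\<lambda>n. Rep_sq (X n))" by (rule bounded_linear.Cauchy[OF bl_Rep])
  then obtain L where "(\<lambda>n. Rep_sq (X n)) \<longlonglongrightarrow> L" by (auto simp: Cauchy_convergent_iff convergent_def)
  then have "(\<lambda>n. Abs_sq (Rep_sq (X n))) \<longlonglongrightarrow> Abs_sq L" by (rule bounded_linear.tendsto[OF bl_Abs])
  then show "convergent X" by (auto simp: Rep_sq_inverse convergent_def)
qed

lemma Rep_Abs_sq[simp]: "Rep_sq (Abs_sq A) = A"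
  by (simp add: Abs_sq_inverse)

lemma Rep_sq_power: "Rep_sq (x ^ n) = mat_pow (Rep_sq x) n"
  by (induction n) (simp_all add: one_sq.rep_eq times_sq.rep_eq)

lemma Rep_sq_exp: "Rep_sq (exp x) = mat_exp (Rep_sq x)"
proof -
  have s: "summable (\<lambda>n. x ^ n /\<^sub>R fact n)" by (rule summable_exp_generic)
  have "Rep_sq (exp x) = (\<Sum>n. Rep_sq (x ^ n /\<^sub>R fact n))"
    unfolding exp_def by (rule bounded_linear.suminf[OF bl_Rep s])
  also have "\<dots> = mat_exp (Rep_sq x)"
    by (simp add: mat_exp_def scaleR_sq.rep_eq Rep_sq_power divide_inverse_commute)
  finally show ?thesis .
qed

lemma mat_exp_Abs: "mat_exp A = Rep_sq (exp (Abs_sq A))"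
  by (simp add: Rep_sq_exp)

lemma summable_mat_exp: "summable (\<lambda>n. (1 / fact n) *\<^sub>R mat_pow (A::real^'n::finite^'n) n)"
  using bounded_linear.summable[OF bl_Rep summable_exp_generic[of "Abs_sq A"]]
  by (simp add: scaleR_sq.rep_eq Rep_sq_power divide_inverse_commute)

lemma bb_app: "bounded_bilinear (\<lambda>(x::'n::finite sq) v. Rep_sq x *v v)"
proof
  fix a a' :: "'n sq" and b b' :: "real^'n" and r :: real
  show "Rep_sq (a + a') *v b = Rep_sq a *v b + Rep_sq a' *v b"
    by (simp add: plus_sq.rep_eq matrix_vector_mult_add_rdistrib)
  show "Rep_sq a *v (b + b') = Rep_sq a *v b + Rep_sq a *v b'"
    by (simp add: matrix_vector_right_distrib)
  show "Rep_sq (r *\<^sub>R a) *v b = r *\<^sub>R (Rep_sq a *v b)"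
    by (simp add: scaleR_sq.rep_eq mat_scaleR_mv)
  show "Rep_sq a *v r *\<^sub>R b = r *\<^sub>R (Rep_sq a *v b)"
    by (simp add: matrix_vector_mult_scaleR)
  show "\<exists>K. \<forall>a b. norm (Rep_sq a *v b) \<le> norm a * norm b * K"
    by (rule exI[of _ 1]) (simp add: norm_sq.rep_eq onorm[OF matrix_vector_mul_bounded_linear])
qed

lemma bl_app: "bounded_linear (\<lambda>(x::'n::finite sq). Rep_sq x *v v)"
  by (rule bounded_bilinear.bounded_linear_left[OF bb_app, simplified])

lemma exp_app_deriv_left:
  "((\<lambda>t. Rep_sq (exp (t *\<^sub>R K)) *v v) has_vector_derivative (Rep_sq (K * exp (t *\<^sub>R K)) *v v)) (at t within S)"
  by (rule has_vector_derivative_at_within, rule bounded_linear.has_vector_derivative[OF bl_app exp_scaleR_has_vector_derivative_left])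

lemma exp_app_deriv_right:
  "((\<lambda>t. Rep_sq (exp (t *\<^sub>R K)) *v v) has_vector_derivative (Rep_sq (exp (t *\<^sub>R K) * K) *v v)) (at t within S)"
  by (rule bounded_linear.has_vector_derivative[OF bl_app exp_scaleR_has_vector_derivative_right])

lemma const_from_deriv0:
  fixes f :: "real \<Rightarrow> 'a::real_normed_vector"
  assumes "\<And>t. (f has_vector_derivative 0) (at t)"
  shows "f t = f 0"
  using has_derivative_zero_unique[of UNIV f t 0] assms
  by (auto simp: has_vector_derivative_def)

lemma exp_app_fix:
  assumes "Q *v u = 0"
  shows "Rep_sq (exp (t *\<^sub>R Abs_sq Q)) *v u = u"
proof -
  have "(\<lambda>t. Rep_sq (exp (t *\<^sub>R Abs_sq Q)) *v u) t = (\<lambda>t. Rep_sq (exp (t *\<^sub>R Abs_sq Q)) *v u) 0"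
  proof (rule const_from_deriv0)
    fix t
    show "((\<lambda>t. Rep_sq (exp (t *\<^sub>R Abs_sq Q)) *v u) has_vector_derivative 0) (at t)"
      using exp_app_deriv_right[of "Abs_sq Q" u t UNIV] assms
      by (simp add: times_sq.rep_eq matrix_vector_mul_assoc[symmetric])
  qed
  then show ?thesis by (simp add: one_sq.rep_eq)
qed

lemma exp_app_left_inv:
  assumes "\<And>x. z \<bullet> (Q *v x) = 0"
  shows "z \<bullet> (Rep_sq (exp (t *\<^sub>R Abs_sq Q)) *v v) = z \<bullet> v"
proof -
  have "(\<lambda>t. z \<bullet> (Rep_sq (exp (t *\<^sub>R Abs_sq Q)) *v v)) t = (\<lambda>t. z \<bullet> (Rep_sq (exp (t *\<^sub>R Abs_sq Q)) *v v)) 0"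
  proof (rule const_from_deriv0)
    fix t
    show "((\<lambda>t. z \<bullet> (Rep_sq (exp (t *\<^sub>R Abs_sq Q)) *v v)) has_vector_derivative 0) (at t)"
      using bounded_linear.has_vector_derivative[OF bounded_linear_inner_right exp_app_deriv_left[of "Abs_sq Q" v t UNIV], of z] assms
      by (simp add: times_sq.rep_eq matrix_vector_mul_assoc[symmetric])
  qed
  then show ?thesis by (simp add: one_sq.rep_eq)
qed

lemma mat_pow_nonneg:
  assumes "\<forall>i j. 0 \<le> (A::real^'n::finite^'n) $ i $ j"
  shows "0 \<le> mat_pow A n $ i $ j"
  using assms
proof (induction n arbitrary: i j)
  case 0
  then show ?case by (simp add: mat_def)
next
  case (Suc n)
  then show ?case by (simp add: matrix_matrix_mult_def sum_nonneg)
qed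

lemma bl_entry: "bounded_linear (\<lambda>M::real^'n^'m. M $ i $ j)"
  using bounded_linear_compose[OF bounded_linear_vec_nth[of j] bounded_linear_vec_nth[of i]] by simp

lemma mat_exp_entry:
  "summable (\<lambda>n. (1 / fact n) * mat_pow (A::real^'n::finite^'n) n $ i $ j)
   \<and> mat_exp A $ i $ j = (\<Sum>n. (1 / fact n) * mat_pow A n $ i $ j)"
  using bounded_linear.summable[OF bl_entry summable_mat_exp[of A], of i j]
        bounded_linear.suminf[OF bl_entry summable_mat_exp[of A], of i j]
  by (simp add: mat_exp_def)

lemma mat_exp_nonneg:
  assumes "\<forall>i j. 0 \<le> (A::real^'n::finite^'n) $ i $ j"
  shows "0 \<le> mat_exp A $ i $ j"
  using mat_exp_entry[of A i j] mat_pow_nonneg[OF assms]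
  by (simp add: suminf_nonneg)

lemma mat_exp_ge_term:
  assumes "\<forall>i j. 0 \<le> (A::real^'n::finite^'n) $ i $ j"
  shows "(1 / fact n) * mat_pow A n $ i $ j \<le> mat_exp A $ i $ j"
  using mat_exp_entry[of A i j] mat_pow_nonneg[OF assms]
        sum_le_suminf[of "\<lambda>n. (1 / fact n) * mat_pow A n $ i $ j" "{n}"]
  by simp

lemma row_sum_ones: "(N *v ones) $ i = (\<Sum>l\<in>UNIV. N $ i $ l)"
  by (simp add: matrix_vector_mult_def ones_def)

lemma stoch_interval:
  fixes N :: "real^'n::finite^'n"
  assumes nn: "\<forall>i l. 0 \<le> N $ i $ l" and rs: "N *v ones = ones"
    and y: "\<forall>l. a \<le> y $ l \<and> y $ l \<le> a + w"
  shows "a \<le> (N *v y) $ i \<and> (N *v y) $ i \<le> a + w"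
proof -
  have s1: "(\<Sum>l\<in>UNIV. N $ i $ l) = 1"
    using row_sum_ones[of N i] rs by (simp add: ones_def)
  have "(\<Sum>l\<in>UNIV. N $ i $ l * a) \<le> (\<Sum>l\<in>UNIV. N $ i $ l * y $ l)"
    by (rule sum_mono) (simp add: mult_left_mono nn y)
  moreover have "(\<Sum>l\<in>UNIV. N $ i $ l * y $ l) \<le> (\<Sum>l\<in>UNIV. N $ i $ l * (a + w))"
    by (rule sum_mono) (simp add: mult_left_mono nn y)
  ultimately show ?thesis
    by (simp add: matrix_vector_mult_def sum_distrib_right[symmetric] s1)
qed

lemma contract_interval:
  fixes N :: "real^'n::finite^'n"
  assumes nn: "\<forall>i l. g \<le> N $ i $ l" and rs: "N *v ones = ones"
    and y: "\<forall>l. a \<le> y $ l \<and> y $ l \<le> a + w"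
  shows "\<exists>a'. \<forall>i. a' \<le> (N *v y) $ i \<and> (N *v y) $ i \<le> a' + (1 - real CARD('n) * g) * w"
proof -
  define s where "s = (\<Sum>l\<in>UNIV. y $ l - a)"
  have "\<forall>i. a + g * s \<le> (N *v y) $ i \<and> (N *v y) $ i \<le> a + g * s + (1 - real CARD('n) * g) * w"
  proof
    fix i
    have s1: "(\<Sum>l\<in>UNIV. N $ i $ l) = 1"
      using row_sum_ones[of N i] rs by (simp add: ones_def)
    have e1: "(N *v y) $ i - a = (\<Sum>l\<in>UNIV. N $ i $ l * (y $ l - a))"
      by (simp add: matrix_vector_mult_def right_diff_distrib sum_subtractf sum_distrib_right[symmetric] s1)
    have e2: "a + w - (N *v y) $ i = (\<Sum>l\<in>UNIV. N $ i $ l * (a + w - y $ l))"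
      by (simp add: matrix_vector_mult_def right_diff_distrib sum_subtractf sum_distrib_right[symmetric] s1)
    have "(\<Sum>l\<in>UNIV. g * (y $ l - a)) \<le> (\<Sum>l\<in>UNIV. N $ i $ l * (y $ l - a))"
      by (rule sum_mono) (simp add: mult_right_mono nn y)
    then have l1: "g * s \<le> (N *v y) $ i - a"
      by (simp add: e1 s_def sum_distrib_left)
    have "(\<Sum>l\<in>UNIV. g * (a + w - y $ l)) \<le> (\<Sum>l\<in>UNIV. N $ i $ l * (a + w - y $ l))"
      by (rule sum_mono) (simp add: mult_right_mono nn y)
    moreover have "(\<Sum>l\<in>UNIV. g * (a + w - y $ l)) = g * (real CARD('n) * w - s)"
      by (simp add: s_def sum_distrib_left[symmetric] sum_subtractf algebra_simps)
    ultimately have l2: "g * (real CARD('n) * w - s) \<le> a + w - (N *v y) $ i"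
      by (simp add: e2)
    show "a + g * s \<le> (N *v y) $ i \<and> (N *v y) $ i \<le> a + g * s + (1 - real CARD('n) * g) * w"
      using l1 l2 by (simp add: algebra_simps)
  qed
  then show ?thesis by blast
qed

lemma z_interval:
  fixes z u :: "real^'n::finite"
  assumes "\<forall>i. 0 \<le> z $ i" "ones \<bullet> z = 1" "\<forall>l. a \<le> u $ l \<and> u $ l \<le> a + w"
  shows "a \<le> z \<bullet> u \<and> z \<bullet> u \<le> a + w"
proof -
  have s1: "(\<Sum>l\<in>UNIV. z $ l) = 1" using assms(2) by (simp add: inner_vec_def ones_def)
  have "(\<Sum>l\<in>UNIV. z $ l * a) \<le> (\<Sum>l\<in>UNIV. z $ l * u $ l)"
    by (rule sum_mono) (simp add: mult_left_mono assms)
  moreover have "(\<Sum>l\<in>UNIV. z $ l * u $ l) \<le> (\<Sum>l\<in>UNIV. z $ l * (a + w))"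
    by (rule sum_mono) (simp add: mult_left_mono assms)
  moreover have "(\<Sum>l\<in>UNIV. z $ l * a) = a" by (simp add: sum_distrib_right[symmetric] s1)
  moreover have "(\<Sum>l\<in>UNIV. z $ l * (a + w)) = a + w" by (simp only: sum_distrib_right[symmetric] s1) simp
  moreover have "z \<bullet> u = (\<Sum>l\<in>UNIV. z $ l * u $ l)" by (simp add: inner_vec_def)
  ultimately show ?thesis by linarith
qed


lemma markov_limit:
  fixes P :: "real^'n::finite^'n" and d :: real and z v :: "real^'n"
  assumes P_nn: "\<forall>i j. 0 \<le> P $ i $ j"
    and P_irr: "\<forall>i l. \<exists>j. 0 < mat_pow P j $ i $ l"
    and rows: "(P - d *\<^sub>R mat 1) *v ones = 0"
    and zQ: "\<forall>x. z \<bullet> ((P - d *\<^sub>R mat 1) *v x) = 0"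
    and z_nn: "\<forall>i. 0 \<le> z $ i" and z_norm: "ones \<bullet> z = 1"
  shows "((\<lambda>t. Rep_sq (exp (t *\<^sub>R Abs_sq (P - d *\<^sub>R mat 1))) *v v) \<longlongrightarrow> (z \<bullet> v) *\<^sub>R ones) at_top"
proof -
  define K where "K = Abs_sq (P - d *\<^sub>R mat 1)"
  define E where "E t = Rep_sq (exp (t *\<^sub>R K))" for t
  have E_split: "E t = exp (-(t*d)) *\<^sub>R mat_exp (t *\<^sub>R P)" for t
  proof -
    have "t *\<^sub>R K = t *\<^sub>R Abs_sq P + (-(t*d)) *\<^sub>R 1"
      by (simp add: K_def Rep_sq_inject[symmetric] plus_sq.rep_eq minus_sq.rep_eq uminus_sq.rep_eq scaleR_sq.rep_eq one_sq.rep_eq algebra_simps)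
    moreover have "(t *\<^sub>R Abs_sq P) * ((-(t*d)) *\<^sub>R 1) = ((-(t*d)) *\<^sub>R 1) * (t *\<^sub>R Abs_sq P)"
      by simp
    ultimately have "exp (t *\<^sub>R K) = exp (t *\<^sub>R Abs_sq P) * exp ((-(t*d)) *\<^sub>R 1)"
      using exp_add_commuting by metis
    also have "exp ((-(t*d)) *\<^sub>R (1::'n sq)) = exp (-(t*d)) *\<^sub>R 1"
      using exp_of_real[of "-(t*d)", where 'a="'n sq"] by (simp add: of_real_def)
    finally show ?thesis
      by (simp add: E_def scaleR_sq.rep_eq Rep_sq_exp)
  qed
  have E_nn: "0 \<le> E t $ i $ l" if "0 \<le> t" for t i l
  proof -
    have "\<forall>i j. 0 \<le> (t *\<^sub>R P) $ i $ j" using P_nn that by simp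
    then show ?thesis using mat_exp_nonneg[of "t *\<^sub>R P" i l] by (simp add: E_split)
  qed
  have E_rows: "E t *v ones = ones" for t
    using exp_app_fix[OF rows] by (simp add: E_def K_def)
  have E_z: "z \<bullet> (E t *v y) = z \<bullet> y" for t y
    using exp_app_left_inv[of z "P - d *\<^sub>R mat 1"] zQ by (simp add: E_def K_def)
  have E_add: "E (s + t) = E s ** E t" for s t
  proof -
    have "exp ((s + t) *\<^sub>R K) = exp (s *\<^sub>R K) * exp (t *\<^sub>R K)"
      by (simp add: scaleR_add_left exp_add_commuting)
    then show ?thesis by (simp add: E_def times_sq.rep_eq)
  qed
  have E0: "E 0 = mat 1" by (simp add: E_def one_sq.rep_eq)
  have E1_pos: "0 < E 1 $ i $ l" for i l
  proof -
    obtain j where j: "0 < mat_pow P j $ i $ l" using P_irr by blast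
    have "0 < (1 / fact j) * mat_pow P j $ i $ l" using j by simp
    also have "\<dots> \<le> mat_exp P $ i $ l" by (rule mat_exp_ge_term[OF P_nn])
    finally show ?thesis by (simp add: E_split)
  qed
  define g where "g = Min ((\<lambda>(i, l). E 1 $ i $ l) ` UNIV)"
  have g_le: "g \<le> E 1 $ i $ l" for i l
    unfolding g_def by (rule Min_le) auto
  have g_pos: "0 < g"
    unfolding g_def using E1_pos by (subst Min_gr_iff) auto
  define \<rho> where "\<rho> = 1 - real CARD('n) * g"
  have \<rho>_lt: "\<rho> < 1" using g_pos by (simp add: \<rho>_def)
  have \<rho>_ge: "0 \<le> \<rho>"
  proof -
    fix i :: 'n
    have "(\<Sum>l\<in>(UNIV::'n set). g) \<le> (\<Sum>l\<in>UNIV. E 1 $ i $ l)" by (rule sum_mono) (rule g_le)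
    also have "\<dots> = 1" using row_sum_ones[of "E 1" i] E_rows[of 1] by (simp add: ones_def)
    finally show ?thesis by (simp add: \<rho>_def)
  qed
  define w0 where "w0 = 2 * norm v"
  have v_int: "\<forall>l. - norm v \<le> v $ l \<and> v $ l \<le> - norm v + w0"
  proof
    fix l
    have "\<bar>v $ l\<bar> \<le> norm v" by (rule component_le_norm_cart)
    then show "- norm v \<le> v $ l \<and> v $ l \<le> - norm v + w0" by (simp add: w0_def abs_le_iff)
  qed
  have iter: "\<exists>a. \<forall>i. a \<le> (E (real m) *v v) $ i \<and> (E (real m) *v v) $ i \<le> a + \<rho> ^ m * w0" for m
  proof (induction m)
    case 0
    then show ?case using v_int by (auto simp: E0)
  next
    case (Suc m)
    then obtain a where a: "\<forall>i. a \<le> (E (real m) *v v) $ i \<and> (E (real m) *v v) $ i \<le> a + \<rho> ^ m * w0" by blast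
    have "E (real (Suc m)) *v v = E 1 *v (E (real m) *v v)"
      using E_add[of 1 "real m"] by (simp add: matrix_vector_mul_assoc add.commute)
    moreover obtain a' where "\<forall>i. a' \<le> (E 1 *v (E (real m) *v v)) $ i \<and> (E 1 *v (E (real m) *v v)) $ i \<le> a' + \<rho> * (\<rho> ^ m * w0)"
      using contract_interval[of g "E 1" a "E (real m) *v v" "\<rho> ^ m * w0"] g_le E_rows a
      unfolding \<rho>_def by blast
    ultimately show ?case by (auto simp: mult.assoc)
  qed
  have bound: "norm (E t *v v - (z \<bullet> v) *\<^sub>R ones) \<le> real CARD('n) * (\<rho> ^ nat \<lfloor>t\<rfloor> * w0)" if "0 \<le> t" for t
  proof -
    define m where "m = nat \<lfloor>t\<rfloor>"
    define r where "r = t - real m"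
    have r: "0 \<le> r" using that by (simp add: r_def m_def)
    have Et: "E t *v v = E r *v (E (real m) *v v)"
      using E_add[of r "real m"] by (simp add: r_def matrix_vector_mul_assoc)
    obtain a where a: "\<forall>i. a \<le> (E (real m) *v v) $ i \<and> (E (real m) *v v) $ i \<le> a + \<rho> ^ m * w0"
      using iter by blast
    have ai: "\<forall>i. a \<le> (E t *v v) $ i \<and> (E t *v v) $ i \<le> a + \<rho> ^ m * w0"
      unfolding Et using stoch_interval[of "E r" a "E (real m) *v v"] E_nn[OF r] E_rows a by blast
    have az: "a \<le> z \<bullet> v \<and> z \<bullet> v \<le> a + \<rho> ^ m * w0"
      using z_interval[OF z_nn z_norm ai] E_z by simp
    have "norm (E t *v v - (z \<bullet> v) *\<^sub>R ones) \<le> (\<Sum>i\<in>UNIV. \<bar>(E t *v v - (z \<bullet> v) *\<^sub>R ones) $ i\<bar>)"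
      by (rule norm_le_l1_cart)
    also have "\<dots> \<le> (\<Sum>i\<in>(UNIV::'n set). \<rho> ^ m * w0)"
    proof (rule sum_mono)
      fix i
      have "a \<le> (E t *v v) $ i" "(E t *v v) $ i \<le> a + \<rho> ^ m * w0" using ai by auto
      then show "\<bar>(E t *v v - (z \<bullet> v) *\<^sub>R ones) $ i\<bar> \<le> \<rho> ^ m * w0"
        using az by (simp add: ones_def abs_le_iff)
    qed
    finally show ?thesis by (simp add: m_def)
  qed
  have lim0: "((\<lambda>t. real CARD('n) * (\<rho> ^ nat \<lfloor>t\<rfloor> * w0)) \<longlongrightarrow> 0) at_top"
  proof -
    have "((\<lambda>n. \<rho> ^ n) \<longlongrightarrow> 0) sequentially"
      by (rule LIMSEQ_power_zero) (use \<rho>_lt \<rho>_ge in simp)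
    then have "((\<lambda>t. \<rho> ^ nat \<lfloor>t\<rfloor>) \<longlongrightarrow> 0) at_top"
      by (rule filterlim_compose) (rule filterlim_compose[OF filterlim_nat_sequentially filterlim_floor_sequentially])
    then show ?thesis by (auto intro!: tendsto_eq_intros)
  qed
  have "((\<lambda>t. E t *v v - (z \<bullet> v) *\<^sub>R ones) \<longlongrightarrow> 0) at_top"
    by (rule Lim_null_comparison[OF _ lim0]) (use bound in \<open>auto simp: eventually_at_top_linorder\<close>)
  then show ?thesis by (simp add: Lim_null[symmetric] E_def K_def)
qed


lemma Bt_ones:
  fixes src dst :: "'m::finite \<Rightarrow> 'n::finite"
  shows "transpose (incidence_mat src dst) *v ones = 0"
  by (simp add: vec_eq_iff matrix_vector_mult_def transpose_def incidence_mat_def src_mat_def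
      dst_mat_def ones_def sum_subtractf)

lemma Q_entry:
  fixes src dst :: "'m::finite \<Rightarrow> 'n::finite"
  shows "(dst_mat dst ** transpose (incidence_mat src dst)) $ i $ j =
    (\<Sum>e\<in>UNIV. if dst e = i \<and> src e = j then 1 else 0) - (if i = j then (\<Sum>e\<in>UNIV. if dst e = i then 1 else 0) else 0)"
proof -
  have "(dst_mat dst ** transpose (incidence_mat src dst)) $ i $ j =
     (\<Sum>e\<in>UNIV. (if dst e = i \<and> src e = j then 1 else 0) - (if i = j then (if dst e = i then 1 else 0) else 0))"
    unfolding matrix_matrix_mult_def vec_lambda_beta
    by (rule sum.cong) (auto simp: transpose_def incidence_mat_def src_mat_def dst_mat_def)
  then show ?thesis by (simp add: sum_subtractf)
qed


lemma P_lower: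
  fixes src dst :: "'m::finite \<Rightarrow> 'n::finite"
  assumes k: "0 < k"
  shows "k * (\<Sum>e\<in>UNIV. if dst e = i \<and> src e = j then 1 else 0) \<le>
    (k *\<^sub>R (dst_mat dst ** transpose (incidence_mat src dst)) + (k * real CARD('m)) *\<^sub>R mat 1) $ i $ j"
proof -
  define cnt where "cnt = (\<Sum>e\<in>(UNIV::'m set). if dst e = i \<and> src e = j then 1 else (0::real))"
  define deg where "deg = (\<Sum>e\<in>(UNIV::'m set). if dst e = i then 1 else (0::real))"
  have deg: "deg \<le> real CARD('m)"
    unfolding deg_def using sum_mono[of UNIV "\<lambda>e. if dst e = i then 1 else (0::real)" "\<lambda>e. 1"] by simp
  have "(k *\<^sub>R (dst_mat dst ** transpose (incidence_mat src dst)) + (k * real CARD('m)) *\<^sub>R mat 1) $ i $ j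
     = k * (cnt - (if i = j then deg else 0)) + (if i = j then k * real CARD('m) else 0)"
    unfolding cnt_def deg_def by (simp add: mat_def Q_entry)
  moreover have "k * cnt \<le> k * (cnt - (if i = j then deg else 0)) + (if i = j then k * real CARD('m) else 0)"
    using deg k by (cases "i = j") (simp_all add: algebra_simps mult_left_mono)
  ultimately show ?thesis by (simp add: cnt_def)
qed

lemma P_nonneg:
  fixes src dst :: "'m::finite \<Rightarrow> 'n::finite"
  assumes k: "0 < k"
  shows "0 \<le> (k *\<^sub>R (dst_mat dst ** transpose (incidence_mat src dst)) + (k * real CARD('m)) *\<^sub>R mat 1) $ i $ j"
proof -
  have "0 \<le> k * (\<Sum>e\<in>UNIV. if dst e = i \<and> src e = j then 1 else (0::real))"
    using k by (intro mult_nonneg_nonneg sum_nonneg) auto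
  then show ?thesis using P_lower[OF k, of dst i src j] by linarith
qed

lemma P_irred:
  fixes src dst :: "'m::finite \<Rightarrow> 'n::finite"
  assumes k: "0 < k" and conn: "strongly_connected src dst"
  shows "\<exists>j. 0 < mat_pow (k *\<^sub>R (dst_mat dst ** transpose (incidence_mat src dst)) + (k * real CARD('m)) *\<^sub>R mat 1) j $ i $ l"
proof -
  define P where "P = k *\<^sub>R (dst_mat dst ** transpose (incidence_mat src dst)) + (k * real CARD('m)) *\<^sub>R mat 1"
  have Pnn: "\<forall>i j. 0 \<le> P $ i $ j" using P_nonneg[OF k, where src=src and dst=dst] by (simp add: P_def)
  have "(l, i) \<in> (edge_rel src dst)\<^sup>*" using conn by (simp add: strongly_connected_def)
  then have "\<exists>j. 0 < mat_pow P j $ i $ l"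
  proof (induction rule: rtrancl_induct)
    case base
    then show ?case by (rule exI[of _ 0]) (simp add: mat_def)
  next
    case (step y x)
    then obtain j where j: "0 < mat_pow P j $ y $ l" by blast
    from step(2) obtain e where e: "src e = y" "dst e = x" by (auto simp: edge_rel_def)
    have "(1::real) \<le> (\<Sum>e\<in>UNIV. if dst e = x \<and> src e = y then 1 else 0)"
      using member_le_sum[of e UNIV "\<lambda>e. if dst e = x \<and> src e = y then (1::real) else 0"] e by simp
    then have "k * 1 \<le> k * (\<Sum>e\<in>UNIV. if dst e = x \<and> src e = y then 1 else (0::real))"
      using k by (intro mult_left_mono) auto
    then have "k \<le> P $ x $ y"
      using P_lower[OF k, of dst x src y] unfolding P_def by linarith
    then have pxy: "0 < P $ x $ y * mat_pow P j $ y $ l" using j k by simp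
    also have "\<dots> \<le> (\<Sum>u\<in>UNIV. P $ x $ u * mat_pow P j $ u $ l)"
      by (rule member_le_sum) (use Pnn in \<open>auto intro!: mult_nonneg_nonneg mat_pow_nonneg\<close>)
    finally show ?case by (intro exI[of _ "Suc j"]) (simp add: matrix_matrix_mult_def)
  qed
  then show ?thesis by (simp add: P_def)
qed


lemma mv_uminus_right: "(A::real^'n^'m) *v (- x) = - (A *v x)"
  by (simp add: vec_eq_iff matrix_vector_mult_def sum_negf)

theorem proposition2:
  fixes src dst :: "'m::finite \<Rightarrow> 'n::finite"
    and z :: "real^'n" and T L Linv :: "real^'n^'n" and i0 :: 'n
    and omega_u :: "real^'n" and k :: real
    and theta :: "real \<Rightarrow> real^'n"
  defines "W \<equiv> ones_outer z"
    and "Qdd \<equiv> T ** Linv ** matrix_inv T"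
    and "c \<equiv> (\<lambda>t. k *\<^sub>R (dst_mat dst *v (transpose (incidence_mat src dst) *v theta t)))"
  assumes graph_inj: "inj (\<lambda>e. (src e, dst e))"
    and no_loops: "\<forall>e. src e \<noteq> dst e"
    and conn: "strongly_connected src dst"
    and z_pos: "\<forall>i. z $ i > 0"
    and z_left: "z v* (dst_mat dst ** transpose (incidence_mat src dst)) = 0"
    and z_norm: "ones \<bullet> z = 1"
    and T_inv: "invertible T"
    and T_col: "\<forall>i. T $ i $ i0 = 1"
    and Tinv_row: "matrix_inv T $ i0 = z"
    and L_blk: "zero_first_block i0 L"
    and Linv_blk: "zero_first_block i0 Linv"
    and L_Linv: "L ** Linv = proj_off i0"
    and Linv_L: "Linv ** L = proj_off i0"
    and Q_decomp: "(dst_mat dst ** transpose (incidence_mat src dst)) = T ** L ** matrix_inv T"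
    and k_pos: "k > 0"
    and ode: "\<forall>t\<ge>0. (theta has_vector_derivative (omega_u + c t)) (at t within {0..})"
  shows "(\<forall>t\<ge>0. theta t =
            (t *\<^sub>R W + (1 / k) *\<^sub>R (Qdd ** (mat_exp ((k * t) *\<^sub>R (dst_mat dst ** transpose (incidence_mat src dst))) - mat 1))) *v omega_u
            + mat_exp ((k * t) *\<^sub>R (dst_mat dst ** transpose (incidence_mat src dst))) *v theta 0)
       \<and> ((\<lambda>t. omega_u + c t) \<longlongrightarrow> W *v omega_u) at_top
       \<and> ((\<lambda>t. transpose (incidence_mat src dst) *v theta t) \<longlongrightarrow> - ((1 / k) *\<^sub>R (transpose (incidence_mat src dst) *v (Qdd *v omega_u)))) at_top"
proof -
  define Q where "Q = dst_mat dst ** transpose (incidence_mat src dst)"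
  define Bt where "Bt = transpose (incidence_mat src dst)"
  define Ti where "Ti = matrix_inv T"
  have TT: "T ** Ti = mat 1 \<and> Ti ** T = mat 1"
    using T_inv someI_ex[of "\<lambda>A'. T ** A' = mat 1 \<and> A' ** T = mat 1"]
    unfolding invertible_def Ti_def matrix_inv_def by blast
  have TTi: "T *v (Ti *v x) = x" for x using TT by (simp add: matrix_vector_mul_assoc)
  have TiT: "Ti *v (T *v x) = x" for x using TT by (simp add: matrix_vector_mul_assoc)
  have kne: "k \<noteq> 0" using k_pos by simp
  have W_app: "W *v x = (z \<bullet> x) *\<^sub>R ones" for x
    by (simp add: W_def ones_outer_def vec_eq_iff matrix_vector_mult_def inner_vec_def ones_def)
  have Bt_ones': "Bt *v ones = 0" using Bt_ones unfolding Bt_def .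
  have Q_ones: "Q *v ones = 0"
    using Bt_ones' by (simp add: Q_def Bt_def matrix_vector_mul_assoc[symmetric])
  have BtW: "Bt *v (W *v x) = 0" for x by (simp add: W_app matrix_vector_mult_scaleR Bt_ones')
  have QW: "Q *v (W *v x) = 0" for x by (simp add: W_app matrix_vector_mult_scaleR Q_ones)
  have zones: "z \<bullet> ones = 1" using z_norm by (simp add: inner_commute)
  have WW: "W *v (W *v x) = W *v x" for x
    by (simp add: W_app zones)
  have zQ: "z \<bullet> (Q *v x) = 0" for x
    using z_left dot_lmul_matrix[of z Q x] by (simp add: Q_def)
  have T_axis: "T *v axis i0 1 = ones"
    using T_col by (simp add: vec_eq_iff matrix_vector_mult_def axis_def ones_def if_distrib cong: if_cong)
  have Ti_ones: "Ti *v ones = axis i0 1" using T_axis TiT by metis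
  have Tix_i0: "(Ti *v x) $ i0 = z \<bullet> x" for x
    using Tinv_row by (simp add: matrix_vector_mul_component Ti_def)
  have proj_i: "(proj_off i0 *v y) $ i = (if i = i0 then 0 else y $ i)" for i y
  proof (cases "i = i0")
    case True
    then show ?thesis by (simp add: proj_off_def matrix_vector_mult_def)
  next
    case False
    have "(\<Sum>j\<in>UNIV. (if i = j \<and> i \<noteq> i0 then 1 else 0) * y $ j) = (\<Sum>j\<in>UNIV. if i = j then y $ j else 0)"
      by (rule sum.cong) (auto simp: False)
    then show ?thesis using False by (simp add: proj_off_def matrix_vector_mult_def)
  qed
  have proj_app: "proj_off i0 *v y = y - (y $ i0) *\<^sub>R axis i0 1" for y
    by (simp add: vec_eq_iff proj_i axis_def)
  have Tproj: "T *v (proj_off i0 *v (Ti *v x)) = x - W *v x" for x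
    by (simp add: proj_app matrix_vector_mult_diff_distrib matrix_vector_mult_scaleR T_axis Tix_i0 W_app TTi)
  have Qdd_app: "Qdd *v x = T *v (Linv *v (Ti *v x))" for x
    by (simp add: Qdd_def Ti_def matrix_vector_mul_assoc matrix_mul_assoc)
  have Q_app: "Q *v x = T *v (L *v (Ti *v x))" for x
    by (simp add: Q_def Q_decomp Ti_def matrix_vector_mul_assoc matrix_mul_assoc)
  have LinvL: "Linv *v (L *v y) = proj_off i0 *v y" for y
    by (simp only: matrix_vector_mul_assoc Linv_L)
  have LLinv: "L *v (Linv *v y) = proj_off i0 *v y" for y
    by (simp only: matrix_vector_mul_assoc L_Linv)
  have QddQ: "Qdd *v (Q *v x) = x - W *v x" for x
    using Tproj[of x] by (simp only: Qdd_app Q_app TiT LinvL)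
  have QQdd: "Q *v (Qdd *v x) = x - W *v x" for x
    using Tproj[of x] by (simp only: Qdd_app Q_app TiT LLinv)
  have Linv_axis: "Linv *v axis i0 1 = 0"
    using Linv_blk by (simp add: zero_first_block_def vec_eq_iff matrix_vector_mult_def axis_def if_distrib cong: if_cong)
  have QddW: "Qdd *v (W *v x) = 0" for x
    by (simp add: W_app matrix_vector_mult_scaleR Qdd_app Ti_ones Linv_axis)
  define K where "K = Abs_sq (k *\<^sub>R Q)"
  define Em where "Em t = Rep_sq (exp (t *\<^sub>R K))" for t
  have Em_mat: "mat_exp ((k * t) *\<^sub>R Q) = Em t" for t
  proof -
    have "Abs_sq ((k * t) *\<^sub>R Q) = t *\<^sub>R K"
      by (simp add: K_def Rep_sq_inject[symmetric] scaleR_sq.rep_eq)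
    then show ?thesis by (simp add: mat_exp_Abs Em_def)
  qed
  have Em0: "Em 0 = mat 1" by (simp add: Em_def one_sq.rep_eq)
  have Em_deriv: "((\<lambda>t. Em t *v v) has_vector_derivative (k *\<^sub>R (Q *v (Em t *v v)))) (at t within S)" for v t S
    using exp_app_deriv_left[of K v t S]
    by (simp add: Em_def K_def times_sq.rep_eq matrix_vector_mul_assoc[symmetric] mat_scaleR_mv)
  have Em_lim: "((\<lambda>t. Em t *v v) \<longlongrightarrow> W *v v) at_top" for v
  proof -
    define P where "P = k *\<^sub>R Q + (k * real CARD('m)) *\<^sub>R mat 1"
    have PQ: "P - (k * real CARD('m)) *\<^sub>R mat 1 = k *\<^sub>R Q" by (simp add: P_def)
    have "((\<lambda>t. Rep_sq (exp (t *\<^sub>R Abs_sq (P - (k * real CARD('m)) *\<^sub>R mat 1))) *v v) \<longlongrightarrow> (z \<bullet> v) *\<^sub>R ones) at_top"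
    proof (rule markov_limit)
      show "\<forall>i j. 0 \<le> P $ i $ j" using P_nonneg[OF k_pos, where src=src and dst=dst] by (simp add: P_def Q_def)
      show "\<forall>i l. \<exists>j. 0 < mat_pow P j $ i $ l" using P_irred[OF k_pos conn] by (simp add: P_def Q_def)
      show "(P - (k * real CARD('m)) *\<^sub>R mat 1) *v ones = 0" by (simp add: PQ mat_scaleR_mv Q_ones)
      show "\<forall>x. z \<bullet> ((P - (k * real CARD('m)) *\<^sub>R mat 1) *v x) = 0" by (simp add: PQ mat_scaleR_mv zQ)
      show "\<forall>i. 0 \<le> z $ i" using z_pos by (simp add: less_imp_le)
      show "ones \<bullet> z = 1" by (rule z_norm)
    qed
    then show ?thesis by (simp add: PQ Em_def K_def W_app)
  qed
  have c_eq: "c t = k *\<^sub>R (Q *v theta t)" for t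
    by (simp only: c_def Q_def matrix_vector_mul_assoc)
  define F where "F t = t *\<^sub>R (W *v omega_u) + (1 / k) *\<^sub>R (Qdd *v (Em t *v omega_u - omega_u)) + Em t *v theta 0" for t
  define F' where "F' t = W *v omega_u + (1 / k) *\<^sub>R (Qdd *v (k *\<^sub>R (Q *v (Em t *v omega_u)))) + k *\<^sub>R (Q *v (Em t *v theta 0))" for t
  have F_deriv: "(F has_vector_derivative F' t) (at t within S)" for t S
  proof -
    have d1: "((\<lambda>t. t *\<^sub>R (W *v omega_u)) has_vector_derivative (W *v omega_u)) (at t within S)"
      using bounded_linear.has_vector_derivative[OF bounded_linear_scaleR_left has_vector_derivative_id, of "W *v omega_u" "at t within S"]
      by simp
    have d2: "((\<lambda>t. (1 / k) *\<^sub>R (Qdd *v (Em t *v omega_u - omega_u))) has_vector_derivative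
              (1 / k) *\<^sub>R (Qdd *v (k *\<^sub>R (Q *v (Em t *v omega_u)) - 0))) (at t within S)"
      by (rule bounded_linear.has_vector_derivative[OF bounded_linear_compose[OF bounded_linear_scaleR_right matrix_vector_mul_bounded_linear]])
         (intro has_vector_derivative_diff Em_deriv has_vector_derivative_const)
    show ?thesis
      unfolding F_def[abs_def] F'_def
      using has_vector_derivative_add[OF has_vector_derivative_add[OF d1 d2] Em_deriv[of "theta 0" t S]] by simp
  qed
  have F_ode: "F' t = omega_u + k *\<^sub>R (Q *v F t)" for t
    using kne
    by (simp add: F_def F'_def matrix_vector_right_distrib matrix_vector_mult_diff_distrib matrix_vector_mult_scaleR
        QW QQdd QddQ algebra_simps)
  have mv_neg: "(- A) *v x = - (A *v x)" for A :: "real^'n^'n" and x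
    by (simp add: vec_eq_iff matrix_vector_mult_def sum_negf)
  have mv_neg_r: "A *v (- x) = - (A *v x)" for A :: "real^'n^'n" and x
    by (simp add: vec_eq_iff matrix_vector_mult_def sum_negf)
  have Hinv: "Em t ** Rep_sq (exp (t *\<^sub>R (-K))) = mat 1" for t
  proof -
    have "exp (t *\<^sub>R K) * exp (t *\<^sub>R (-K)) = 1"
      using exp_minus_inverse[of "t *\<^sub>R K"] by simp
    then show ?thesis by (metis Em_def one_sq.rep_eq times_sq.rep_eq)
  qed
  define G where "G t = Rep_sq (exp (t *\<^sub>R (-K))) *v (theta t - F t)" for t
  have G_deriv: "(G has_derivative (\<lambda>h. 0)) (at t within {0..})" if "t \<in> {0..}" for t
  proof -
    have dth: "((\<lambda>t. theta t - F t) has_vector_derivative (omega_u + c t - F' t)) (at t within {0..})"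
      using ode that F_deriv by (auto intro: has_vector_derivative_diff)
    have dH: "((\<lambda>t. exp (t *\<^sub>R (-K))) has_vector_derivative exp (t *\<^sub>R (-K)) * (-K)) (at t within {0..})"
      by (rule exp_scaleR_has_vector_derivative_right)
    have "((\<lambda>t. Rep_sq (exp (t *\<^sub>R (-K))) *v (theta t - F t)) has_vector_derivative
          (Rep_sq (exp (t *\<^sub>R (-K))) *v (omega_u + c t - F' t) + Rep_sq (exp (t *\<^sub>R (-K)) * (-K)) *v (theta t - F t))) (at t within {0..})"
      using bounded_bilinear.has_vector_derivative[OF bb_app dH dth] by simp
    moreover have "Rep_sq (exp (t *\<^sub>R (-K))) *v (omega_u + c t - F' t) + Rep_sq (exp (t *\<^sub>R (-K)) * (-K)) *v (theta t - F t) = 0"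
    proof -
      have "Rep_sq (exp (t *\<^sub>R (-K)) * (-K)) *v (theta t - F t) = Rep_sq (exp (t *\<^sub>R (-K))) *v (- (k *\<^sub>R (Q *v (theta t - F t))))"
        by (simp add: times_sq.rep_eq uminus_sq.rep_eq K_def matrix_vector_mul_assoc[symmetric] mat_scaleR_mv mv_neg mv_neg_r)
      moreover have "omega_u + c t - F' t + (- (k *\<^sub>R (Q *v (theta t - F t)))) = 0"
        using F_ode[of t] by (simp add: c_eq matrix_vector_mult_diff_distrib algebra_simps)
      ultimately show ?thesis by (simp add: matrix_vector_right_distrib[symmetric])
    qed
    ultimately show ?thesis by (simp add: G_def[abs_def] has_vector_derivative_def)
  qed
  obtain c0 where c0: "\<forall>x\<in>{0..}. G x = c0"
    using has_derivative_zero_constant[of "{0::real..}" G] G_deriv by auto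
  have F0: "F 0 = theta 0" by (simp add: F_def Em0)
  have G0: "G 0 = 0" by (simp add: G_def F0 one_sq.rep_eq)
  have thF: "theta t = F t" if "0 \<le> t" for t
  proof -
    have "G t = 0" using c0 G0 that by auto
    then have "Em t *v G t = 0" by simp
    then show ?thesis using Hinv[of t] by (simp add: G_def matrix_vector_mul_assoc)
  qed
  have conj1: "\<forall>t\<ge>0. theta t =
            (t *\<^sub>R W + (1 / k) *\<^sub>R (Qdd ** (mat_exp ((k * t) *\<^sub>R (dst_mat dst ** transpose (incidence_mat src dst))) - mat 1))) *v omega_u
            + mat_exp ((k * t) *\<^sub>R (dst_mat dst ** transpose (incidence_mat src dst))) *v theta 0"
  proof (intro allI impI)
    fix t :: real assume "0 \<le> t"
    then show "theta t =
            (t *\<^sub>R W + (1 / k) *\<^sub>R (Qdd ** (mat_exp ((k * t) *\<^sub>R (dst_mat dst ** transpose (incidence_mat src dst))) - mat 1))) *v omega_u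
            + mat_exp ((k * t) *\<^sub>R (dst_mat dst ** transpose (incidence_mat src dst))) *v theta 0"
      using thF[of t] unfolding Q_def[symmetric] Em_mat
      by (simp add: F_def matrix_vector_mult_add_rdistrib mat_scaleR_mv matrix_vector_mul_assoc[symmetric]
          matrix_vector_mult_diff_rdistrib)
  qed
  have mvt: "((\<lambda>t. A *v f t) \<longlongrightarrow> A *v l) at_top" if "(f \<longlongrightarrow> l) at_top" for A :: "real^'n^'n" and f l
    by (rule bounded_linear.tendsto[OF matrix_vector_mul_bounded_linear that])
  have conj2: "((\<lambda>t. omega_u + c t) \<longlongrightarrow> W *v omega_u) at_top"
  proof -
    have ev: "\<forall>\<^sub>F t in at_top. W *v omega_u + (Em t *v omega_u - W *v (Em t *v omega_u)) + k *\<^sub>R (Q *v (Em t *v theta 0)) = omega_u + c t"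
      unfolding eventually_at_top_linorder
    proof (intro exI allI impI)
      fix t :: real assume "0 \<le> t"
      then have "omega_u + c t = F' t" using thF[of t] F_ode[of t] by (simp add: c_eq)
      then show "W *v omega_u + (Em t *v omega_u - W *v (Em t *v omega_u)) + k *\<^sub>R (Q *v (Em t *v theta 0)) = omega_u + c t"
        using kne by (simp add: F'_def matrix_vector_mult_scaleR QddQ)
    qed
    have "((\<lambda>t. W *v omega_u + (Em t *v omega_u - W *v (Em t *v omega_u)) + k *\<^sub>R (Q *v (Em t *v theta 0)))
       \<longlongrightarrow> W *v omega_u + (W *v omega_u - W *v (W *v omega_u)) + k *\<^sub>R (Q *v (W *v theta 0))) at_top"
      by (intro tendsto_add tendsto_diff tendsto_scaleR tendsto_const mvt Em_lim)
    then have "((\<lambda>t. W *v omega_u + (Em t *v omega_u - W *v (Em t *v omega_u)) + k *\<^sub>R (Q *v (Em t *v theta 0)))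
       \<longlongrightarrow> W *v omega_u) at_top"
      by (simp add: WW QW)
    then show ?thesis using tendsto_cong[OF ev] by simp
  qed
  have conj3: "((\<lambda>t. transpose (incidence_mat src dst) *v theta t) \<longlongrightarrow> - ((1 / k) *\<^sub>R (transpose (incidence_mat src dst) *v (Qdd *v omega_u)))) at_top"
  proof -
    have ev: "\<forall>\<^sub>F t in at_top. (1 / k) *\<^sub>R (Bt *v (Qdd *v (Em t *v omega_u - omega_u))) + Bt *v (Em t *v theta 0) = Bt *v theta t"
      unfolding eventually_at_top_linorder
    proof (intro exI allI impI)
      fix t :: real assume "0 \<le> t"
      then show "(1 / k) *\<^sub>R (Bt *v (Qdd *v (Em t *v omega_u - omega_u))) + Bt *v (Em t *v theta 0) = Bt *v theta t"
        using thF[of t] by (simp add: F_def matrix_vector_right_distrib matrix_vector_mult_scaleR BtW)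
    qed
    have "((\<lambda>t. (1 / k) *\<^sub>R (Bt *v (Qdd *v (Em t *v omega_u - omega_u))) + Bt *v (Em t *v theta 0))
       \<longlongrightarrow> (1 / k) *\<^sub>R (Bt *v (Qdd *v (W *v omega_u - omega_u))) + Bt *v (W *v theta 0)) at_top"
    proof -
      have l1: "((\<lambda>t. Em t *v omega_u - omega_u) \<longlongrightarrow> W *v omega_u - omega_u) at_top"
        by (intro tendsto_diff Em_lim tendsto_const)
      show ?thesis
        by (intro tendsto_add tendsto_scaleR tendsto_const bounded_linear.tendsto[OF matrix_vector_mul_bounded_linear mvt[OF l1]] bounded_linear.tendsto[OF matrix_vector_mul_bounded_linear Em_lim])
    qed
    then have "((\<lambda>t. (1 / k) *\<^sub>R (Bt *v (Qdd *v (Em t *v omega_u - omega_u))) + Bt *v (Em t *v theta 0))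
       \<longlongrightarrow> - ((1 / k) *\<^sub>R (Bt *v (Qdd *v omega_u)))) at_top"
      by (simp add: BtW QddW matrix_vector_mult_diff_distrib mv_uminus_right)
    then show ?thesis using tendsto_cong[OF ev] by (simp add: Bt_def)
  qed
  show ?thesis using conj1 conj2 conj3 by blast
qed

end
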